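(* Let $p,q\ge 3$ be relatively prime odd integers. Then $$p\sum_{n=1}^{q-1}\frac{\cot(\pi np/q)\cot(\pi n/q)}{\cos^2(\pi n/q)}+q\sum_{n=1}^{p-1}\frac{\cot(\pi nq/p)\cot(\pi n/p)}{\cos^2(\pi n/p)}=\frac{1}{3}\left(p^2+q^2-2\right).$$ *)

theory Defs
  imports Complex_Main
begin

end

theory Submission
  imports Defs "HOL-Complex_Analysis.Complex_Analysis"
begin

lemma root_coprime:
  fixes w :: complex
  assumes "w ^ a = 1" "w ^ b = 1" "coprime a b"
  shows "w = 1"
proof (cases "a = 0")
  case True
  then have "b = 1" using assms(3) by simp
  then show ?thesis using assms(2) by simp
next
  case False
  then obtain x y where xy: "a * x = b * y + gcd a b" using bezout_nat by blast
  have "gcd a b = 1" using assms(3) by simp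
  then have "w ^ (a * x) = w ^ (b * y) * w" using xy by (simp add: power_add)
  then show ?thesis using assms by (simp add: power_mult)
qed

definition RR :: "nat \<Rightarrow> nat \<Rightarrow> complex \<Rightarrow> complex" where
  "RR a b w = (w^a+1)*(w^b+1)/((w^a-1)*(w^b-1)*(w^2-1))"

lemma RR_sym: "RR a b = RR b a"
  by (rule ext) (simp add: RR_def mult_ac)

lemma open_compl_finite: "finite (T::complex set) \<Longrightarrow> open (- T)"
  by (simp add: finite_imp_closed open_Compl)

lemma connected_compl_finite: "finite (T::complex set) \<Longrightarrow> connected (- T)"
  using connected_open_delete_finite[of "UNIV::complex set" T] by (simp add: Compl_eq_Diff_UNIV connected_UNIV)

lemma res_root:
  assumes "odd a" "odd b" "coprime a b" "a > 0" "b > 0" "\<omega> ^ a = 1" "\<omega> \<noteq> 1"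
  shows "residue (RR a b) \<omega> = 2*\<omega>*(\<omega>^b+1)/(of_nat a*(\<omega>^b-1)*(\<omega>^2-1))"
proof -
  have wb: "\<omega>^b \<noteq> 1" using root_coprime assms by blast
  have wm: "\<omega> \<noteq> -1" using assms(1,6) by auto
  have cop2: "coprime a (2*b)" using assms(1,3) by simp
  have wbm: "\<omega>^b \<noteq> -1"
  proof
    assume "\<omega>^b = -1"
    then have "\<omega>^(2*b) = 1" by (simp add: power_mult_distrib power_mult[symmetric] mult.commute[of 2] power_mult)
    then show False using root_coprime[OF assms(6) _ cop2] assms(7) by blast
  qed
  have w2: "\<omega>^2 \<noteq> 1" using wm assms(7) by (simp add: power2_eq_1_iff)
  define T where "T = {w::complex. w^b = 1} \<union> {-1}"
  have finT: "finite T" unfolding T_def using finite_roots_unity[of b] assms(5) by auto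
  define F where "F w = (w^a+1)*(w^b+1)/((w^b-1)*(w^2-1))" for w :: complex
  have RReq: "RR a b = (\<lambda>w. F w / (w^a - 1))"
    by (rule ext) (simp add: RR_def F_def mult_ac)
  have Fh: "F holomorphic_on (- T)"
    unfolding F_def T_def
    by (intro holomorphic_intros) (auto simp: power2_eq_1_iff)
  have der: "((\<lambda>w. w^a - 1) has_field_derivative of_nat a * \<omega>^(a-1)) (at \<omega>)"
    by (auto intro!: derivative_eq_intros)
  have ne: "of_nat a * \<omega>^(a-1) \<noteq> 0" using assms(4,6) by (auto simp: power_0_left)
  have "\<omega>^b + 1 \<noteq> 0" using wbm by (simp add: add_eq_0_iff2)
  moreover have "2*\<omega>^b+2 = 2*(\<omega>^b+1)" by simp
  ultimately have "2*\<omega>^b+2 \<noteq> 0" by (metis mult_eq_0_iff zero_neq_numeral)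
  then have Fne: "F \<omega> \<noteq> 0" unfolding F_def using wb w2 assms(6) by auto
  have "residue (\<lambda>w. F w / (w^a - 1)) \<omega> = F \<omega> / (of_nat a * \<omega>^(a-1))"
    by (rule residue_simple_pole_deriv[OF Fh _ open_compl_finite[OF finT] connected_compl_finite[OF finT] _ der Fne _ ne])
       (use wb wm assms(6) in \<open>auto simp: T_def intro!: holomorphic_intros\<close>)
  also have "\<omega>^(a-1) = 1/\<omega>"
  proof -
    have "\<omega> * \<omega>^(a-1) = \<omega>^a" using assms(4) by (cases a) auto
    moreover have "\<omega> \<noteq> 0" using assms(6,4) by (auto simp: power_0_left)
    ultimately show ?thesis using assms(6) by (simp add: field_simps)
  qed
  also have "F \<omega> = 2*(\<omega>^b+1)/((\<omega>^b-1)*(\<omega>^2-1))" unfolding F_def using assms(6) by simp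
  finally have "residue (RR a b) \<omega> = 2*(\<omega>^b+1)/((\<omega>^b-1)*(\<omega>^2-1)) / (of_nat a * (1/\<omega>))"
    using RReq by simp
  also have "\<dots> = 2*\<omega>*(\<omega>^b+1)/(of_nat a*(\<omega>^b-1)*(\<omega>^2-1))"
    using wb w2 assms(4) by (simp add: field_simps)
  finally show ?thesis .
qed



lemma poch_gen: "pochhammer (of_nat (Suc m - k) :: complex) k = (\<Prod>j<k. of_nat m - of_nat j)"
proof (induction k)
  case 0 then show ?case by simp
next
  case (Suc k)
  show ?case
  proof (cases "k \<le> m")
    case True
    have "pochhammer (of_nat (Suc m - Suc k) :: complex) (Suc k)
        = of_nat (m - k) * pochhammer (of_nat (m - k) + 1) k"
      by (simp add: pochhammer_rec)
    also have "of_nat (m - k) + 1 = (of_nat (Suc m - k) :: complex)" using True by (simp add: Suc_diff_le)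
    also have "of_nat (m - k) = (of_nat m - of_nat k :: complex)" using True by (simp add: of_nat_diff)
    finally show ?thesis using Suc.IH by (simp add: mult.commute)
  next
    case False
    then have "Suc m - Suc k = 0" by simp
    moreover have "(\<Prod>j<Suc k. (of_nat m - of_nat j :: complex)) = 0"
      using False by (intro prod_zero) auto
    ultimately show ?thesis by (simp add: pochhammer_0_left)
  qed
qed

lemma hd_pow1: "(deriv^^k) (\<lambda>w::complex. w^m) 1 = pochhammer (of_nat (Suc m - k)) k"
  using higher_deriv_power[of k 0 m 1] by simp

lemma an_pow: "(\<lambda>w::complex. w^m) analytic_on S"
  by (intro analytic_intros)
lemma an_cmul: "f analytic_on S \<Longrightarrow> (\<lambda>w::complex. c * f w) analytic_on S"
  by (intro analytic_intros)

lemmas hd_simps = higher_deriv_add_at higher_deriv_diff_at higher_deriv_cmult' analytic_on_add analytic_on_diff an_pow an_cmul hd_pow1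

lemma res1:
  fixes p q :: nat
  assumes "p \<ge> 3" "q \<ge> 3"
  shows "residue (RR p q) 1 = (of_nat p ^ 2 + of_nat q ^ 2 - 2) / (6 * of_nat p * of_nat q)"
proof -
  define P where "P w = (\<Sum>i<p. w^i)" for w :: complex
  define Q where "Q w = (\<Sum>i<q. w^i)" for w :: complex
  define E where "E w = (w^p+1)*(w^q+1)" for w :: complex
  define f where "f w = E w / ((w+1)*P w*Q w)" for w
  have Pe: "w^p - 1 = (w-1)*P w" for w unfolding P_def by (rule power_diff_1_eq)
  have Qe: "w^q - 1 = (w-1)*Q w" for w unfolding Q_def by (rule power_diff_1_eq)
  have RReq: "RR p q = (\<lambda>w. f w / (w-1)^Suc 2)"
  proof
    fix w :: complex
    have "(w^p-1)*(w^q-1)*(w^2-1) = ((w+1)*P w*Q w)*(w-1)^Suc 2"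
      by (simp only: Pe Qe) (simp add: power2_eq_square power3_eq_cube algebra_simps)
    then show "RR p q w = f w / (w-1)^Suc 2"
      unfolding RR_def f_def E_def by (simp add: divide_divide_eq_left)
  qed
  define A where "A = {w. (w+1)*P w*Q w \<noteq> 0}"
  have oA: "open A" unfolding A_def P_def Q_def
    by (intro open_Collect_neq continuous_intros)
  have P1: "P 1 = of_nat p" and Q1: "Q 1 = of_nat q" by (simp_all add: P_def Q_def)
  have A1: "1 \<in> A" unfolding A_def using P1 Q1 assms by simp
  have fh: "f holomorphic_on A" unfolding f_def A_def E_def P_def Q_def
    by (intro holomorphic_intros) auto
  have fa: "f analytic_on {1}" using oA A1 fh analytic_at by blast
  have "residue (RR p q) 1 = (deriv^^2) f 1 / fact 2"
    unfolding RReq by (rule residue_holomorphic_over_power[OF oA A1 fh])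
  define H where "H = (\<lambda>w::complex. w^(p+q+1) + w^(p+q) - w^(p+1) - w^p - w^(q+1) - w^q + w^1 + w^0)"
  define G where "G = (\<lambda>w::complex. w^(p+q+2) + w^(p+2) + w^(q+2) + w^2 - 2*w^(p+q+1) - 2*w^(p+1) - 2*w^(q+1) - 2*w^1
     + w^(p+q) + w^p + w^q + w^0)"
  have HG: "H w * f w = G w" if "w \<in> A" for w
  proof -
    have "H w = (w^p-1)*(w^q-1)*(w+1)" unfolding H_def by (simp add: algebra_simps power_add)
    also have "\<dots> = ((w+1)*P w*Q w)*(w-1)^2" by (simp only: Pe Qe) (simp add: power2_eq_square algebra_simps)
    finally have "H w * f w = (w-1)^2 * E w" using that unfolding f_def A_def by simp
    also have "\<dots> = G w" unfolding G_def E_def by (simp add: algebra_simps power_add power2_eq_square)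
    finally show ?thesis .
  qed
  have key: "(\<Sum>i=0..k. of_nat (k choose i) * (deriv^^i) H 1 * (deriv^^(k-i)) f 1) = (deriv^^k) G 1" for k
  proof -
    have "(deriv^^k) (\<lambda>w. H w * f w) 1 = (deriv^^k) G 1"
      by (rule higher_deriv_cong_ev) (use eventually_nhds_in_open[OF oA A1] HG in \<open>auto elim: eventually_mono\<close>)
    moreover have "(deriv^^k) (\<lambda>w. H w * f w) 1 = (\<Sum>i=0..k. of_nat (k choose i) * (deriv^^i) H 1 * (deriv^^(k-i)) f 1)"
      by (rule higher_deriv_mult_at) (auto simp: H_def fa intro!: analytic_intros)
    ultimately show ?thesis by simp
  qed
  define x where "x = (of_nat p :: complex)"
  define y where "y = (of_nat q :: complex)"
  have Hd: "(deriv^^k) H 1 = (\<Prod>j<k. x+y+1 - of_nat j) + (\<Prod>j<k. x+y - of_nat j) - (\<Prod>j<k. x+1 - of_nat j)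
     - (\<Prod>j<k. x - of_nat j) - (\<Prod>j<k. y+1 - of_nat j) - (\<Prod>j<k. y - of_nat j) + (\<Prod>j<k. 1 - of_nat j)
     + (\<Prod>j<k. 0 - of_nat j)" for k
    unfolding H_def by (simp only: hd_simps poch_gen) (simp add: x_def y_def ac_simps)
  have Gd: "(deriv^^k) G 1 = (\<Prod>j<k. x+y+2 - of_nat j) + (\<Prod>j<k. x+2 - of_nat j) + (\<Prod>j<k. y+2 - of_nat j)
     + (\<Prod>j<k. 2 - of_nat j) - 2*(\<Prod>j<k. x+y+1 - of_nat j) - 2*(\<Prod>j<k. x+1 - of_nat j) - 2*(\<Prod>j<k. y+1 - of_nat j)
     - 2*(\<Prod>j<k. 1 - of_nat j) + (\<Prod>j<k. x+y - of_nat j) + (\<Prod>j<k. x - of_nat j) + (\<Prod>j<k. y - of_nat j)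
     + (\<Prod>j<k. 0 - of_nat j)" for k
    unfolding G_def by (simp only: hd_simps poch_gen) (simp add: x_def y_def ac_simps)
  have x0: "x \<noteq> 0" and y0: "y \<noteq> 0" using assms by (auto simp: x_def y_def)
  have E2: "4*x*y*f 1 = 8"
    using key[of 2] by (simp only: Hd Gd) (simp add: eval_nat_numeral algebra_simps)
  have E3: "12*x*y*deriv f 1 + 6*x*y*(x+y-1)*f 1 = 12*(x+y)"
    using key[of 3] by (simp only: Hd Gd) (simp add: eval_nat_numeral algebra_simps)
  have E4: "24*x*y*deriv (deriv f) 1 + 24*x*y*(x+y-1)*deriv f 1 + (8*x^3*y + 12*x^2*y^2 + 8*x*y^3 - 24*x^2*y - 24*x*y^2 + 20*x*y)*f 1 = 24*(x^2+y^2+x*y-x-y)"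
    using key[of 4] by (simp only: Hd Gd) (simp add: eval_nat_numeral algebra_simps)
  have D0: "f 1 = 2/(x*y)" using E2 x0 y0 by (simp add: field_simps)
  have D1: "deriv f 1 = 1/(x*y)"
  proof -
    have "12*x*y*deriv f 1 = 12*(x+y) - 6*x*y*(x+y-1)*f 1" using E3 by (simp add: algebra_simps)
    also have "\<dots> = 12" using x0 y0 by (simp add: D0 field_simps)
    finally show ?thesis using x0 y0 by (simp add: field_simps)
  qed
  have D2: "deriv (deriv f) 1 = (x^2+y^2-2)/(3*x*y)"
  proof -
    have "24*x*y*deriv (deriv f) 1 = 24*(x^2+y^2+x*y-x-y) - 24*x*y*(x+y-1)*deriv f 1 - (8*x^3*y + 12*x^2*y^2 + 8*x*y^3 - 24*x^2*y - 24*x*y^2 + 20*x*y)*f 1"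
      using E4 by (simp add: algebra_simps)
    also have "\<dots> = 8*(x^2+y^2-2)" using x0 y0 by (simp add: D0 D1 field_simps power2_eq_square power3_eq_cube)
    finally have "24*x*y*deriv (deriv f) 1 = 8*(x^2+y^2-2)" .
    then have "deriv (deriv f) 1 = 8*(x^2+y^2-2)/(24*x*y)" using x0 y0
      by (simp add: eq_divide_eq ac_simps)
    also have "8*(x^2+y^2-2)/(24*x*y) = 8*(x^2+y^2-2)/(8*(3*x*y))" by (simp add: mult.assoc)
    also have "\<dots> = (x^2+y^2-2)/(3*x*y)" by (rule mult_divide_mult_cancel_left) simp
    finally show ?thesis .
  qed
  show ?thesis using \<open>residue (RR p q) 1 = (deriv^^2) f 1 / fact 2\<close> D2 x0 y0
    by (simp add: eval_nat_numeral x_def y_def field_simps)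
qed



lemma ratio_bound:
  fixes w :: complex
  assumes "norm w \<ge> 2" "n \<ge> 1"
  shows "norm ((w^n+1)/(w^n-1)) \<le> 3"
proof -
  define t where "t = norm w ^ n"
  have t2: "t \<ge> 2"
  proof -
    have "norm w \<le> norm w ^ n" using assms by (intro self_le_power) auto
    then show ?thesis using assms unfolding t_def by linarith
  qed
  have n1: "norm (w^n+1) \<le> t + 1" unfolding t_def
    using norm_triangle_ineq[of "w^n" 1] by (simp add: norm_power)
  have n2: "norm (w^n-1) \<ge> t - 1" unfolding t_def
    using norm_triangle_ineq2[of "w^n" 1] by (simp add: norm_power)
  have "norm ((w^n+1)/(w^n-1)) = norm (w^n+1) / norm (w^n-1)" by (simp add: norm_divide)
  also have "\<dots> \<le> (t+1)/(t-1)"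
    using n1 n2 t2 by (intro frac_le) auto
  also have "\<dots> \<le> 3" using t2 by (simp add: field_simps)
  finally show ?thesis .
qed

lemma RR_bound:
  fixes w :: complex
  assumes "norm w \<ge> 2" "a \<ge> 1" "b \<ge> 1"
  shows "norm (RR a b w) \<le> 18 / norm w ^ 2"
proof -
  have eq: "RR a b w = ((w^a+1)/(w^a-1)) * ((w^b+1)/(w^b-1)) / (w^2-1)"
    unfolding RR_def by simp
  have c: "norm (w^2-1) \<ge> norm w ^ 2 / 2"
  proof -
    have "norm (w^2-1) \<ge> norm w ^ 2 - 1"
      using norm_triangle_ineq2[of "w^2" 1] by (simp add: norm_power)
    moreover have "norm w ^ 2 \<ge> 4" using power_mono[of 2 "norm w" 2] assms(1) by simp
    ultimately show ?thesis by linarith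
  qed
  have pos: "norm w ^ 2 / 2 > 0" using assms(1) by (auto intro!: divide_pos_pos)
  have "norm (RR a b w) = norm ((w^a+1)/(w^a-1)) * norm ((w^b+1)/(w^b-1)) / norm (w^2-1)"
    unfolding eq by (simp add: norm_mult norm_divide)
  also have "\<dots> \<le> 3 * 3 / (norm w ^ 2 / 2)"
    using ratio_bound[OF assms(1,2)] ratio_bound[OF assms(1,3)] c pos
    by (intro frac_le mult_mono) auto
  also have "\<dots> = 18 / norm w ^ 2" by simp
  finally show ?thesis .
qed

lemma root_norm: "(z::complex)^n = 1 \<Longrightarrow> n \<ge> 1 \<Longrightarrow> norm z = 1"
  by (metis norm_ge_zero norm_one norm_power not_one_le_zero power_eq_1_iff)

lemma sum_res_zero:
  assumes "a \<ge> 1" "b \<ge> 1"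
  defines "pts \<equiv> {w::complex. w^a = 1} \<union> {w. w^b = 1} \<union> {-1}"
  shows "(\<Sum>z\<in>pts. residue (RR a b) z) = 0"
proof -
  define S where "S = (\<Sum>z\<in>pts. residue (RR a b) z)"
  have fin: "finite pts" unfolding pts_def using assms by (auto intro: finite_roots_unity)
  have npts: "norm z = 1" if "z \<in> pts" for z
    using that assms root_norm unfolding pts_def by auto
  have holo: "RR a b holomorphic_on UNIV - pts"
    unfolding RR_def pts_def by (intro holomorphic_intros) (auto simp: power2_eq_1_iff)
  have bnd: "norm S \<le> 18 / r" if r: "r \<ge> 2" for r :: real
  proof -
    have pimg: "path_image (circlepath 0 r) \<subseteq> UNIV - pts"
      using r npts by (auto simp: path_image_circlepath sphere_def dist_norm)
    have "contour_integral (circlepath 0 r) (RR a b) = 2*pi*\<i>*(\<Sum>z\<in>pts. winding_number (circlepath 0 r) z * residue (RR a b) z)"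
      by (rule Residue_theorem[OF open_UNIV connected_UNIV fin holo]) (use pimg in auto)
    also have "(\<Sum>z\<in>pts. winding_number (circlepath 0 r) z * residue (RR a b) z) = S"
      unfolding S_def using r npts by (intro sum.cong refl) (auto simp: winding_number_circlepath)
    finally have ci: "contour_integral (circlepath 0 r) (RR a b) = 2*pi*\<i>*S" .
    have "RR a b contour_integrable_on (circlepath 0 r)"
      by (rule contour_integrable_holomorphic_simple[OF holo _ _ pimg]) (use fin in \<open>auto intro: finite_imp_closed\<close>)
    then have "(RR a b has_contour_integral 2*pi*\<i>*S) (circlepath 0 r)"
      using ci has_contour_integral_integral by metis
    then have "norm (2*pi*\<i>*S) \<le> 18 / r^2 * (2*pi*r)"
      by (rule has_contour_integral_bound_circlepath) (use r RR_bound[OF _ assms(1,2)] in auto)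
    then have "2*pi*norm S \<le> 2*pi*(18/r)" using r by (simp add: norm_mult power2_eq_square field_simps)
    then show ?thesis using pi_gt_zero by (metis mult_le_cancel_left_pos mult_pos_pos zero_less_numeral)
  qed
  show ?thesis
  proof (rule ccontr)
    assume "(\<Sum>z\<in>pts. residue (RR a b) z) \<noteq> 0"
    then have pos: "norm S > 0" unfolding S_def by simp
    define r where "r = 36 / norm S + 2"
    have "r \<ge> 2" using pos unfolding r_def by simp
    then have "norm S \<le> 18 / r" by (rule bnd)
    moreover have "18 / r < norm S"
    proof -
      have "norm S * r = 36 + 2*norm S" using pos by (simp add: r_def field_simps)
      then have "18 < norm S * r" using pos by linarith
      moreover have "r > 0" using \<open>r \<ge> 2\<close> by simp
      ultimately show ?thesis by (simp add: divide_less_eq mult.commute)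
    qed
    ultimately show False by simp
  qed
qed

lemma cis2p: "cis (2*x) + 1 = 2 * complex_of_real (cos x) * cis x"
  by (simp add: complex_eq_iff cos_double sin_double power2_eq_square) (smt (verit) sin_cos_squared_add2 power2_eq_square)

lemma cis2m: "cis (2*x) - 1 = 2 * \<i> * complex_of_real (sin x) * cis x"
  by (simp add: complex_eq_iff cos_double sin_double power2_eq_square) (smt (verit) sin_cos_squared_add2 power2_eq_square)

lemma trig_conv:
  fixes b :: nat and \<theta> :: real
  defines "\<omega> \<equiv> cis (2*\<theta>)"
  shows "2*\<omega>*(\<omega>^b+1)/((\<omega>^b-1)*(\<omega>^2-1)) = - complex_of_real (cot (real b*\<theta>) * cot \<theta> / (cos \<theta>)^2) / 2"
proof -
  define \<phi> where "\<phi> = real b * \<theta>"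
  have wb: "\<omega>^b = cis (2*\<phi>)" unfolding \<omega>_def \<phi>_def using Complex.DeMoivre[of "2*\<theta>" b] by (simp add: mult_ac)
  have w2: "\<omega>^2 = cis (2*(2*\<theta>))" unfolding \<omega>_def using Complex.DeMoivre[of "2*\<theta>" 2] by (simp add: mult_ac)
  show ?thesis
  proof (cases "sin (2*\<theta>) = 0")
    case True
    have "cis (2*(2*\<theta>)) - 1 = 0" by (simp only: cis2m True) simp
    moreover have "sin \<theta> = 0 \<or> cos \<theta> = 0" using True by (simp add: sin_double)
    ultimately show ?thesis by (auto simp: w2 cot_def)
  next
  case False
  have st: "sin \<theta> \<noteq> 0" and ct: "cos \<theta> \<noteq> 0" using False by (auto simp: sin_double)
  have s2: "complex_of_real (sin (2*\<theta>)) \<noteq> 0" using False by simp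
  show ?thesis
  proof (cases "sin \<phi> = 0")
    case True
    have "cis (2*\<phi>) - 1 = 0" by (simp add: cis2m True)
    then show ?thesis using True by (simp add: wb \<phi>_def cot_def)
  next
    case False
    have "2*\<omega>*(\<omega>^b+1)/((\<omega>^b-1)*(\<omega>^2-1))
        = 2*\<omega>*(2 * complex_of_real (cos \<phi>) * cis \<phi>) / ((2 * \<i> * complex_of_real (sin \<phi>) * cis \<phi>) * (2 * \<i> * complex_of_real (sin (2*\<theta>)) * \<omega>))"
      unfolding wb w2 cis2p cis2m by (simp add: \<omega>_def)
    also have "\<dots> = - complex_of_real (cos \<phi> / (sin \<phi> * sin (2*\<theta>)))"
      using False s2 by (simp add: field_simps \<omega>_def cis_neq_zero)
    also have "cos \<phi> / (sin \<phi> * sin (2*\<theta>)) = cot \<phi> * cot \<theta> / (cos \<theta>)^2 / 2"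
      using st ct False by (simp only: sin_double) (simp add: cot_def field_simps power2_eq_square)
    finally show ?thesis by (simp add: \<phi>_def)
  qed
  qed
qed

lemma res_m1:
  assumes "odd a" "odd b" "a \<ge> 1" "b \<ge> 1"
  shows "residue (RR a b) (-1) = 0"
proof -
  define T where "T = {w::complex. w^a = 1} \<union> {w. w^b = 1}"
  have finT: "finite T" unfolding T_def using assms by (auto intro: finite_roots_unity)
  define h where "h w = (w^a+1)*(w^b+1)/((w^a-1)*(w^b-1)*(w-1))" for w :: complex
  have eq: "RR a b = (\<lambda>w. h w / (w - (-1)))"
  proof
    fix w :: complex
    have "w^2 - 1 = (w-1)*(w - (-1))" by (simp add: power2_eq_square algebra_simps)
    then show "RR a b w = h w / (w - (-1))" unfolding RR_def h_def
      by (simp add: divide_divide_eq_left mult.assoc)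
  qed
  have "residue (\<lambda>w. h w / (w - (-1))) (-1) = h (-1)"
    by (rule residue_simple[OF open_compl_finite[OF finT]]) 
       (use assms in \<open>auto simp: T_def h_def intro!: holomorphic_intros\<close>)
  also have "h (-1) = 0" unfolding h_def using assms by simp
  finally show ?thesis using eq by simp
qed

lemma sum_part:
  assumes "odd a" "odd b" "coprime a b" "a \<ge> 1" "b \<ge> 1"
  shows "(\<Sum>z\<in>{z::complex. z^a = 1} - {1}. residue (RR a b) z)
     = - complex_of_real (\<Sum>n=1..a-1. cot (pi * real n * real b / real a) * cot (pi * real n / real a) / (cos (pi * real n / real a))\<^sup>2) / (2 * of_nat a)"
proof -
  define T where "T z = 2*z*(z^b+1)/((z^b-1)*(z^2-1))" for z :: complex
  define U where "U = {z::complex. z^a = 1}"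
  have finU: "finite U" unfolding U_def using assms by (auto intro: finite_roots_unity)
  have "(\<Sum>z\<in>U - {1}. residue (RR a b) z) = (\<Sum>z\<in>U - {1}. T z / of_nat a)"
    by (intro sum.cong refl) (use assms in \<open>auto simp: U_def T_def res_root divide_divide_eq_left mult_ac\<close>)
  also have "\<dots> = (\<Sum>z\<in>U. T z) / of_nat a"
  proof -
    have "(\<Sum>z\<in>U. T z) = T 1 + (\<Sum>z\<in>U - {1}. T z)"
      using finU by (rule sum.remove) (simp add: U_def)
    moreover have "T 1 = 0" by (simp add: T_def)
    ultimately show ?thesis by (simp add: sum_divide_distrib)
  qed
  also have "(\<Sum>z\<in>U. T z) = (\<Sum>k<a. T (cis (2 * pi * real k / real a)))"
    unfolding U_def by (rule sum.reindex_bij_betw[OF Complex.bij_betw_roots_unity, symmetric]) (use assms in auto)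
  also have "\<dots> = (\<Sum>k\<in>{1..a-1}. T (cis (2 * pi * real k / real a)))"
  proof -
    have "{..<a} = insert 0 {1..a-1}" using assms by auto
    moreover have "T (cis (2 * pi * real 0 / real a)) = 0" by (simp add: T_def)
    ultimately show ?thesis by simp
  qed
  also have "\<dots> = (\<Sum>k\<in>{1..a-1}. - complex_of_real (cot (pi * real k * real b / real a) * cot (pi * real k / real a) / (cos (pi * real k / real a))\<^sup>2) / 2)"
  proof (intro sum.cong refl)
    fix k assume "k \<in> {1..a-1}"
    have e1: "2 * pi * real k / real a = 2 * (pi * real k / real a)" by simp
    have e2: "real b * (pi * real k / real a) = pi * real k * real b / real a" by simp
    show "T (cis (2 * pi * real k / real a)) = - complex_of_real (cot (pi * real k * real b / real a) * cot (pi * real k / real a) / (cos (pi * real k / real a))\<^sup>2) / 2"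
      unfolding T_def e1 trig_conv e2 by simp
  qed
  finally show ?thesis unfolding U_def
    by (simp add: sum_divide_distrib sum_negf mult.assoc)
qed

theorem mainTheorem17:
  fixes p q :: nat
  assumes "p \<ge> 3" "q \<ge> 3" "odd p" "odd q" "coprime p q"
  shows "real p * (\<Sum>n=1..q-1. cot (pi * n * p / q) * cot (pi * n / q) / (cos (pi * n / q))\<^sup>2)
       + real q * (\<Sum>n=1..p-1. cot (pi * n * q / p) * cot (pi * n / p) / (cos (pi * n / p))\<^sup>2)
       = (real p ^ 2 + real q ^ 2 - 2) / 3"
proof -
  define SQ where "SQ = (\<Sum>n=1..q-1. cot (pi * n * p / q) * cot (pi * n / q) / (cos (pi * n / q))\<^sup>2)"
  define SP where "SP = (\<Sum>n=1..p-1. cot (pi * n * q / p) * cot (pi * n / p) / (cos (pi * n / p))\<^sup>2)"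
  define Up where "Up = {w::complex. w^p = 1}"
  define Uq where "Uq = {w::complex. w^q = 1}"
  have p1: "p \<ge> 1" and q1: "q \<ge> 1" using assms by auto
  have finp: "finite Up" unfolding Up_def using p1 by (auto intro: finite_roots_unity)
  have finq: "finite Uq" unfolding Uq_def using q1 by (auto intro: finite_roots_unity)
  have cap: "Up \<inter> Uq = {1}" unfolding Up_def Uq_def using root_coprime[OF _ _ assms(5)] by auto
  have m1p: "-1 \<notin> Up" unfolding Up_def using assms(3) by auto
  have m1q: "-1 \<notin> Uq" unfolding Uq_def using assms(4) by auto
  have pts: "Up \<union> Uq \<union> {-1} = insert 1 (insert (-1) ((Uq - {1}) \<union> (Up - {1})))"
    unfolding Up_def Uq_def by auto
  have "0 = (\<Sum>z\<in>Up \<union> Uq \<union> {-1}. residue (RR p q) z)"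
    using sum_res_zero[OF p1 q1] unfolding Up_def Uq_def by simp
  also have "\<dots> = residue (RR p q) 1 + (residue (RR p q) (-1) +
       ((\<Sum>z\<in>Uq - {1}. residue (RR p q) z) + (\<Sum>z\<in>Up - {1}. residue (RR p q) z)))"
  proof -
    define X where "X = (Uq - {1}) \<union> (Up - {1})"
    have fX: "finite X" unfolding X_def using finp finq by auto
    have nX: "-1 \<notin> X" unfolding X_def using m1p m1q by auto
    have nX1: "1 \<notin> insert (-1) X" unfolding X_def by auto
    have dj: "(Uq - {1}) \<inter> (Up - {1}) = {}" using cap by auto
    have "(\<Sum>z\<in>insert 1 (insert (-1) X). residue (RR p q) z) = residue (RR p q) 1 + (residue (RR p q) (-1) + (\<Sum>z\<in>X. residue (RR p q) z))"
      using fX nX nX1 by (simp add: sum.insert)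
    also have "(\<Sum>z\<in>X. residue (RR p q) z) = (\<Sum>z\<in>Uq - {1}. residue (RR p q) z) + (\<Sum>z\<in>Up - {1}. residue (RR p q) z)"
      unfolding X_def using finp finq dj by (intro sum.union_disjoint) auto
    finally show ?thesis unfolding pts X_def .
  qed
  also have "residue (RR p q) (-1) = 0" using res_m1 assms p1 q1 by blast
  also have "(\<Sum>z\<in>Uq - {1}. residue (RR p q) z) = - complex_of_real SQ / (2 * of_nat q)"
    unfolding RR_sym[of p q] Uq_def SQ_def
    by (rule sum_part) (use assms p1 q1 in \<open>auto simp: coprime_commute\<close>)
  also have "(\<Sum>z\<in>Up - {1}. residue (RR p q) z) = - complex_of_real SP / (2 * of_nat p)"
    unfolding Up_def SP_def
    by (rule sum_part) (use assms p1 q1 in auto)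
  also have "residue (RR p q) 1 = (of_nat p ^ 2 + of_nat q ^ 2 - 2) / (6 * of_nat p * of_nat q)"
    by (rule res1) (use assms in auto)
  finally have eq: "0 = (complex_of_nat p ^ 2 + of_nat q ^ 2 - 2) / (6 * of_nat p * of_nat q)
      + (0 + (- complex_of_real SQ / (2 * of_nat q) + - complex_of_real SP / (2 * of_nat p)))" .
  have pq0: "(2* of_nat p* of_nat q :: complex) \<noteq> 0" using assms by simp
  have "(2* of_nat p* of_nat q) * (2 + 3* of_nat p*complex_of_real SQ + 3* of_nat q*complex_of_real SP)
      = (2* of_nat p* of_nat q) * (of_nat p^2 + of_nat q^2 :: complex)"
    using eq assms by (simp add: field_simps)
  then have "2 + 3* of_nat p*complex_of_real SQ + 3* of_nat q*complex_of_real SP = (of_nat p^2 + of_nat q^2 :: complex)"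
    using pq0 by (rule mult_left_cancel[THEN iffD1, rotated])
  then have "complex_of_real (2 + 3*(real p * SQ + real q * SP)) = complex_of_real (real p ^ 2 + real q ^ 2)"
    by (simp add: algebra_simps)
  then have "2 + 3*(real p * SQ + real q * SP) = real p ^ 2 + real q ^ 2" by (simp only: of_real_eq_iff)
  then have "real p * SQ + real q * SP = (real p ^ 2 + real q ^ 2 - 2) / 3" by (simp add: field_simps)
  then show ?thesis unfolding SQ_def SP_def .
qed

end
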